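(* Fix $k\in\{1,\dots,n\}$ and let $A\subseteq P_{\{1,\dots,k\}}M_n(\mathbb{C})$ be a set such that $E_{m,m}\in A$ for every $m\in\{1,\dots,k\}$, and such that for every nonempty subset $J\subseteq\{1,\dots,k\}$ we have $P_J\,A\,(1_n-P_J)\neq\{0\}$. Then for every $t\in\{1,\dots,k\}$ the algebra generated by $A$ contains an element $S$ such that $S(t,l)\neq 0$ for some $l\in\{k+1,\dots,n\}$.
   Context: $E_{i,j}$ denote the matrix units of $M_n(\mathbb{C})$, $1_n$ is the identity matrix, and for $J\subseteq\{1,\dots,n\}$, $P_J=\sum_{i\in J}E_{i,i}$. For a matrix $a$, $a(i,j)$ denotes its $(i,j)$ entry. $P_J A(1_n-P_J)$ denotes the set $\{P_Ja(1_n-P_J): a\in A\}$. *)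

theory Defs
  imports "Jordan_Normal_Form.Matrix"
begin

text \<open>Conventions: matrices are n x n complex matrices (JNF type complex mat,
  carrier_mat n n). The paper's indices 1..n are used throughout; the JNF
  entry (i-1, j-1) is the paper's entry (i, j).\<close>

definition munit :: "nat \<Rightarrow> nat \<Rightarrow> nat \<Rightarrow> complex mat" where
  "munit n i j = mat n n (\<lambda>(r, c). if r + 1 = i \<and> c + 1 = j then 1 else 0)"

definition proj :: "nat \<Rightarrow> nat set \<Rightarrow> complex mat" where
  "proj n J = mat n n (\<lambda>(r, c). if r = c \<and> r + 1 \<in> J then 1 else 0)"

definition entry :: "complex mat \<Rightarrow> nat \<Rightarrow> nat \<Rightarrow> complex" where
  "entry a i j = a $$ (i - 1, j - 1)"

inductive_set gen_alg :: "complex mat set \<Rightarrow> complex mat set" for A where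
  gen: "a \<in> A \<Longrightarrow> a \<in> gen_alg A"
| add: "a \<in> gen_alg A \<Longrightarrow> b \<in> gen_alg A \<Longrightarrow> a + b \<in> gen_alg A"
| mult: "a \<in> gen_alg A \<Longrightarrow> b \<in> gen_alg A \<Longrightarrow> a * b \<in> gen_alg A"
| smult: "a \<in> gen_alg A \<Longrightarrow> c \<cdot>\<^sub>m a \<in> gen_alg A"

end

theory Submission
  imports Defs
begin

lemma gen_alg_carrier:
  assumes "A \<subseteq> carrier_mat n n" and "S \<in> gen_alg A"
  shows "S \<in> carrier_mat n n"
  using assms(2)
proof (induction rule: gen_alg.induct)
  case (gen a) then show ?case using assms(1) by auto
next
  case (add a b) then show ?case by auto
next
  case (mult a b) then show ?case by auto
next
  case (smult a c) then show ?case by auto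
qed

lemma proj_carrier[simp]: "proj n J \<in> carrier_mat n n"
  by (simp add: proj_def)

lemma munit_carrier[simp]: "munit n i j \<in> carrier_mat n n"
  by (simp add: munit_def)

lemma sum_single:
  fixes n c :: nat
  assumes "c < n" and "\<And>i. i < n \<Longrightarrow> i \<noteq> c \<Longrightarrow> g i = (0::complex)"
  shows "(\<Sum>i = 0..<n. g i) = g c"
proof -
  have "(\<Sum>i = 0..<n. g i) = (\<Sum>i \<in> {c}. g i)"
    by (rule sum.mono_neutral_right) (use assms in auto)
  then show ?thesis by simp
qed

lemma proj_left:
  assumes "a \<in> carrier_mat n n" "r < n" "c < n"
  shows "(proj n J * a) $$ (r,c) = (if r+1 \<in> J then a $$ (r,c) else 0)"
  using assms apply (auto simp: index_mult_mat scalar_prod_def proj_def intro!: sum.neutral)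
  apply (subst sum_single[where c=r]) apply auto done

lemma projc_right:
  assumes "a \<in> carrier_mat n n" "r < n" "c < n"
  shows "(a * (1\<^sub>m n - proj n J)) $$ (r,c) = (if c+1 \<in> J then 0 else a $$ (r,c))"
  using assms apply (auto simp: index_mult_mat scalar_prod_def proj_def intro!: sum.neutral)
  apply (subst sum_single[where c=c]) apply auto done

lemma munit_right:
  assumes "a \<in> carrier_mat n n" "r < n" "m < n" "c < n"
  shows "(a * munit n (Suc c) (Suc c)) $$ (r,m) = (if m = c then a $$ (r,c) else 0)"
  using assms apply (auto simp: index_mult_mat scalar_prod_def munit_def intro!: sum.neutral)
  apply (subst sum_single[where c=c]) apply auto done

lemma mult_entry:
  assumes "X \<in> carrier_mat n n" "Y \<in> carrier_mat n n" "r < n" "s < n"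
  shows "(X * Y) $$ (r,s) = (\<Sum>i = 0..<n. X $$ (r,i) * Y $$ (i, s))"
  using assms by (auto simp: index_mult_mat scalar_prod_def intro!: sum.cong)

lemma triple:
  assumes "a \<in> carrier_mat n n" "b \<in> carrier_mat n n" "r < n" "s < n" "c < n"
  shows "(a * munit n (c+1) (c+1) * b) $$ (r,s) = a $$ (r,c) * b $$ (c,s)"
proof -
  have "(a * munit n (c+1) (c+1) * b) $$ (r,s) = (\<Sum>i = 0..<n. (a * munit n (c+1) (c+1)) $$ (r,i) * b $$ (i, s))"
    by (rule mult_entry) (use assms in auto)
  also have "\<dots> = (a * munit n (c+1) (c+1)) $$ (r,c) * b $$ (c, s)"
    using assms by (intro sum_single) (auto simp: munit_right)
  also have "\<dots> = a $$ (r,c) * b $$ (c,s)" using assms by (simp add: munit_right)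
  finally show ?thesis .
qed

lemma nonzero_entry:
  assumes "M \<in> carrier_mat n n" "M \<noteq> 0\<^sub>m n n"
  shows "\<exists>r<n. \<exists>c<n. M $$ (r,c) \<noteq> 0"
proof (rule ccontr)
  assume "\<not> ?thesis"
  then have "M = 0\<^sub>m n n" using assms(1) by (intro eq_matI) auto
  with assms(2) show False by simp
qed

lemma set_ne_single:
  assumes "{f a | a. a \<in> A} \<noteq> {z}" "x \<in> A"
  shows "\<exists>a\<in>A. f a \<noteq> z"
  using assms by auto

theorem lemma5:
  fixes n k :: nat and A :: "complex mat set"
  assumes "k \<in> {1..n}"
    and "A \<subseteq> {proj n {1..k} * a | a. a \<in> carrier_mat n n}"
    and "\<forall>m \<in> {1..k}. munit n m m \<in> A"
    and "\<forall>J. J \<subseteq> {1..k} \<and> J \<noteq> {} \<longrightarrow>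
           {proj n J * a * (1\<^sub>m n - proj n J) | a. a \<in> A} \<noteq> {0\<^sub>m n n}"
  shows "\<forall>t \<in> {1..k}. \<exists>S \<in> gen_alg A. \<exists>l \<in> {k+1..n}. entry S t l \<noteq> 0"
proof (rule ccontr)
  assume neg: "\<not> ?thesis"
  define R where "R = {t\<in>{1..k}. \<not> (\<exists>S \<in> gen_alg A. \<exists>l \<in> {k+1..n}. entry S t l \<noteq> 0)}"
  have Rne: "R \<noteq> {}" using neg unfolding R_def by blast
  have Rsub: "R \<subseteq> {1..k}" unfolding R_def by auto
  have Ac: "A \<subseteq> carrier_mat n n"
  proof
    fix x assume "x \<in> A"
    then obtain b where "x = proj n {1..k} * b" "b \<in> carrier_mat n n" using assms(2) by blast
    then show "x \<in> carrier_mat n n" by (metis mult_carrier_mat proj_carrier)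
  qed
  have "munit n 1 1 \<in> A" using assms(1,3) by auto
  then have ne: "{proj n R * a * (1\<^sub>m n - proj n R) | a. a \<in> A} \<noteq> {}" by blast
  have n0: "{proj n R * a * (1\<^sub>m n - proj n R) | a. a \<in> A} \<noteq> {0\<^sub>m n n}"
    using assms(4) Rne Rsub by simp
  have "\<exists>a\<in>A. proj n R * a * (1\<^sub>m n - proj n R) \<noteq> 0\<^sub>m n n"
    using set_ne_single[OF n0] \<open>munit n 1 1 \<in> A\<close> by blast
  then obtain a where aA: "a \<in> A" and anz: "proj n R * a * (1\<^sub>m n - proj n R) \<noteq> 0\<^sub>m n n"
    by blast
  have ac: "a \<in> carrier_mat n n" using aA Ac by auto
  have "proj n R * a * (1\<^sub>m n - proj n R) \<in> carrier_mat n n"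
    by (rule mult_carrier_mat[OF mult_carrier_mat[OF proj_carrier ac] minus_carrier_mat[OF proj_carrier]])
  then obtain r c where rc: "r < n" "c < n" and nz: "(proj n R * a * (1\<^sub>m n - proj n R)) $$ (r,c) \<noteq> 0"
    using nonzero_entry anz by blast
  have pc: "proj n R * a \<in> carrier_mat n n" by (rule mult_carrier_mat[OF proj_carrier ac])
  have ent: "(proj n R * a * (1\<^sub>m n - proj n R)) $$ (r,c) = (if c+1 \<in> R then 0 else if r+1 \<in> R then a $$ (r,c) else 0)"
    using projc_right[OF pc rc] proj_left[OF ac rc] by simp
  with nz have cR: "c+1 \<notin> R" and rR: "r+1 \<in> R" and arc: "a $$ (r,c) \<noteq> 0"
    by (auto split: if_splits)
  show False
  proof (cases "c+1 \<le> k")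
    case False
    then have "a \<in> gen_alg A" "c+1 \<in> {k+1..n}" "entry a (r+1) (c+1) \<noteq> 0"
      using aA rc arc by (auto intro: gen_alg.gen simp: entry_def)
    then show False using rR unfolding R_def by blast
  next
    case True
    then have "c+1 \<in> {1..k}" by auto
    with cR obtain S l where S: "S \<in> gen_alg A" "l \<in> {k+1..n}" "entry S (c+1) l \<noteq> 0"
      unfolding R_def by blast
    have Sc: "S \<in> carrier_mat n n" using gen_alg_carrier[OF Ac S(1)] .
    define T where "T = a * munit n (c+1) (c+1) * S"
    have mA: "munit n (c+1) (c+1) \<in> A" using assms(3) \<open>c+1 \<in> {1..k}\<close> by auto
    have TA: "T \<in> gen_alg A" unfolding T_def
      by (rule gen_alg.mult[OF gen_alg.mult[OF gen_alg.gen[OF aA] gen_alg.gen[OF mA]] S(1)])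
    have l1: "l - 1 < n" using S(2) by auto
    have "entry T (r+1) l = a $$ (r,c) * S $$ (c, l-1)"
      unfolding entry_def T_def using triple[OF ac Sc rc(1) l1 rc(2)] by simp
    also have "\<dots> \<noteq> 0" using arc S(3) by (simp add: entry_def)
    finally show False using rR TA S(2) unfolding R_def by blast
  qed
qed

end
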